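(* Let $k\ge 2$ be an integer. For any $k-1$ distinct positive integers $a_1<a_2<\cdots<a_{k-1}$, there exists an index $i$ with $2\left\lfloor\frac{k-1}{3}\right\rfloor\leq a_i\leq a_{k-1}-\left\lfloor\frac{k-1}{3}\right\rfloor$. *)

theory Defs
  imports Main
begin

end

theory Submission
  imports Defs
begin

lemma gap:
  fixes a :: "nat \<Rightarrow> nat"
  assumes "\<And>i j. i \<in> {1..n} \<Longrightarrow> j \<in> {1..n} \<Longrightarrow> i < j \<Longrightarrow> a i < a j"
  shows "1 \<le> i \<Longrightarrow> i + d \<le> n \<Longrightarrow> a i + d \<le> a (i + d)"
proof (induction d)
  case 0 then show ?case by simp
next
  case (Suc d)
  then have "a i + d \<le> a (i + d)" by simp
  moreover have "a (i + d) < a (i + Suc d)" using Suc.prems by (intro assms) auto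
  ultimately show ?case by simp
qed

theorem lemma2:
  fixes k :: nat and a :: "nat \<Rightarrow> nat"
  assumes "k \<ge> 2"
    and "\<And>i. i \<in> {1..k-1} \<Longrightarrow> a i > 0"
    and "\<And>i j. i \<in> {1..k-1} \<Longrightarrow> j \<in> {1..k-1} \<Longrightarrow> i < j \<Longrightarrow> a i < a j"
  shows "\<exists>i\<in>{1..k-1}. 2 * ((k - 1) div 3) \<le> a i \<and> int (a i) \<le> int (a (k-1)) - int ((k - 1) div 3)"
proof -
  define n where "n = k - 1"
  define m where "m = n div 3"
  have n1: "n \<ge> 1" using assms(1) n_def by simp
  have mn: "3 * m \<le> n" using m_def by simp
  define i where "i = n - m"
  have i1: "1 \<le> i" using i_def mn n1 by simp
  have a1: "a 1 > 0" using assms(2) n1 n_def by auto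
  have "a 1 + (i - 1) \<le> a (1 + (i - 1))"
    using gap[of "k-1" a 1 "i - 1"] assms(3) i1 i_def n_def by simp
  then have lo: "a i \<ge> i" using a1 i1 by simp
  have "a i + m \<le> a (i + m)"
    using gap[of "k-1" a i m] assms(3) i1 i_def n_def mn by simp
  then have hi: "a i + m \<le> a n" using i_def mn by simp
  show ?thesis
  proof (rule bexI[of _ i])
    have "2 * m \<le> a i" using lo mn i_def by linarith
    moreover have "int (a i) \<le> int (a n) - int m" using hi by linarith
    ultimately show "2 * ((k - 1) div 3) \<le> a i \<and> int (a i) \<le> int (a (k-1)) - int ((k - 1) div 3)"
      unfolding m_def n_def by simp
    show "i \<in> {1..k-1}" using i1 i_def n_def by simp
  qed
qed

end
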